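(* For every $\pi\in\mathfrak{S}_n$, \[\sum_{k\ge0}\Omega^{(\ell)}(\pi;k)\,t^k=\frac{(1+t)^n}{(1-t)^{n+1}}\left(\frac{4t}{(1+t)^2}\right)^{\operatorname{lpe}(\pi)}\] as formal power series in $t$.
   Context: $\mathfrak{S}_n$ is the symmetric group on $[n]$; permutations are words $(\pi(1),\dots,\pi(n))$. With $\pi(0)=\pi(n+1)=0$, a left peak of $\pi$ is a position $i$ with $1\le i<n$ and $\pi(i-1)<\pi(i)>\pi(i+1)$; $\operatorname{lpe}(\pi)$ is the number of left peaks. For an integer $k\ge0$ let $Z_k$ be the totally ordered set $0<\bar1<1<\bar2<2<\dots<\bar k<k$, with $0$ and unbarred $j$ "plus-type" and barred $\bar j$ "minus-type". The left enriched order polynomial $\Omega^{(\ell)}(\pi;k)$ is the number of sequences $(a_1,\dots,a_n)\in Z_k^n$ with $a_1\le\dots\le a_n$ such that for every $s\in[n-1]$: if $\pi(s)<\pi(s+1)$ then $a_s<a_{s+1}$ or ($a_s=a_{s+1}$ is plus-type); if $\pi(s)>\pi(s+1)$ then $a_s<a_{s+1}$ or ($a_s=a_{s+1}$ is minus-type). *)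

theory Defs
  imports "HOL-Combinatorics.Permutations" "HOL-Library.FuncSet"
    "HOL-Computational_Algebra.Formal_Power_Series"
begin

definition pval :: "nat \<Rightarrow> (nat \<Rightarrow> nat) \<Rightarrow> nat \<Rightarrow> nat" where
  "pval n p i = (if 1 \<le> i \<and> i \<le> n then p i else 0)"

definition lpe :: "nat \<Rightarrow> (nat \<Rightarrow> nat) \<Rightarrow> nat" where
  "lpe n p = card {i. 1 \<le> i \<and> i < n \<and>
      pval n p (i - 1) < pval n p i \<and> pval n p i > pval n p (i + 1)}"

text \<open>Encoding of Z_k as the natural numbers 0..2k with the usual order:
  0 is 0, bar j is 2j-1, j is 2j.  Plus-type = even, minus-type = odd.\<close>
definition Zk :: "nat \<Rightarrow> nat set" where
  "Zk k = {0..2*k}"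

definition plus_type :: "nat \<Rightarrow> bool" where "plus_type z = even z"
definition minus_type :: "nat \<Rightarrow> bool" where "minus_type z = odd z"

definition left_enriched_Omega :: "nat \<Rightarrow> (nat \<Rightarrow> nat) \<Rightarrow> nat \<Rightarrow> nat" where
  "left_enriched_Omega n p k = card {a \<in> {1..n} \<rightarrow>\<^sub>E Zk k.
     (\<forall>s. 1 \<le> s \<and> s < n \<longrightarrow> a s \<le> a (s + 1)) \<and>
     (\<forall>s. 1 \<le> s \<and> s < n \<longrightarrow>
        (p s < p (s + 1) \<longrightarrow> a s < a (s + 1) \<or> (a s = a (s + 1) \<and> plus_type (a s))) \<and>
        (p s > p (s + 1) \<longrightarrow> a s < a (s + 1) \<or> (a s = a (s + 1) \<and> minus_type (a s))))}"

end

theory Submission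
  imports Defs
begin

definition okz :: "(nat \<Rightarrow> bool) \<Rightarrow> nat \<Rightarrow> nat \<Rightarrow> nat \<Rightarrow> bool" where
  "okz D s x y \<longleftrightarrow> x < y \<or> (x = y \<and> (if D s then odd x else even x))"

definition valid :: "nat \<Rightarrow> (nat \<Rightarrow> bool) \<Rightarrow> (nat \<Rightarrow> nat) \<Rightarrow> bool" where
  "valid n D a \<longleftrightarrow> (\<forall>s. 1 \<le> s \<and> s < n \<longrightarrow> okz D s (a s) (a (Suc s)))"

definition BB :: "nat \<Rightarrow> (nat \<Rightarrow> bool) \<Rightarrow> nat \<Rightarrow> (nat \<Rightarrow> nat) set" where
  "BB n D v = {a \<in> {1..n} \<rightarrow>\<^sub>E {0..v}. valid n D a \<and> a n = v}"

definition gg :: "nat \<Rightarrow> (nat \<Rightarrow> bool) \<Rightarrow> nat \<Rightarrow> nat" where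
  "gg n D v = card (BB n D v)"

lemma valid_mono:
  assumes "valid n D a" "1 \<le> i" "i \<le> j" "j \<le> n"
  shows "a i \<le> a j"
  using assms(3,4)
proof (induction j)
  case 0
  thus ?case using assms(2) by simp
next
  case (Suc j)
  show ?case
  proof (cases "i = Suc j")
    case True
    thus ?thesis by simp
  next
    case False
    hence ij: "i \<le> j" using Suc by simp
    hence "a i \<le> a j" using Suc by simp
    moreover have "okz D j (a j) (a (Suc j))"
      using assms(1) Suc.prems ij assms(2) unfolding valid_def by auto
    ultimately show ?thesis unfolding okz_def by auto
  qed
qed

lemma finite_BB: "finite (BB n D v)"
  unfolding BB_def by (rule finite_subset[OF _ finite_PiE[of "{1..n}" "\<lambda>_. {0..v}"]]) auto

lemma BB1: "BB 1 D v = {(\<lambda>x. if x = 1 then v else undefined)}"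
  unfolding BB_def valid_def by (auto simp: PiE_iff extensional_def fun_eq_iff)

lemma gg1: "gg 1 D v = 1"
  unfolding gg_def BB1 by simp

lemma gg1': "gg (Suc 0) D v = 1"
  using gg1 by simp

lemma BB_Suc:
  assumes "n \<ge> 1"
  shows "BB (Suc n) D v = (\<lambda>a. a(Suc n := v)) ` (\<Union>u\<in>{u. okz D n u v}. BB n D u)"
proof (rule set_eqI, rule iffI)
  fix b assume b: "b \<in> BB (Suc n) D v"
  hence bP: "b \<in> {1..Suc n} \<rightarrow>\<^sub>E {0..v}" and bv: "valid (Suc n) D b" and bn: "b (Suc n) = v"
    unfolding BB_def by auto
  define a where "a = b(Suc n := undefined)"
  have "b = a(Suc n := v)" unfolding a_def using bn by auto
  moreover have "okz D n (b n) v" using bv bn assms unfolding valid_def by auto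
  moreover have "a \<in> BB n D (b n)"
  proof -
    have "a \<in> {1..n} \<rightarrow>\<^sub>E {0..b n}"
      using bP valid_mono[OF bv, of _ n] unfolding a_def by (auto simp: PiE_iff extensional_def)
    moreover have "valid n D a" using bv unfolding valid_def a_def by auto
    moreover have "a n = b n" unfolding a_def by simp
    ultimately show ?thesis unfolding BB_def by auto
  qed
  ultimately show "b \<in> (\<lambda>a. a(Suc n := v)) ` (\<Union>u\<in>{u. okz D n u v}. BB n D u)" by blast
next
  fix b assume "b \<in> (\<lambda>a. a(Suc n := v)) ` (\<Union>u\<in>{u. okz D n u v}. BB n D u)"
  then obtain a u where ok: "okz D n u v" and a: "a \<in> BB n D u" and b: "b = a(Suc n := v)" by blast
  from a have aP: "a \<in> {1..n} \<rightarrow>\<^sub>E {0..u}" and av: "valid n D a" and an: "a n = u"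
    unfolding BB_def by auto
  have uv: "u \<le> v" using ok unfolding okz_def by auto
  have aiv: "\<forall>i\<in>{1..n}. a i \<le> v" using aP uv by (auto simp: PiE_iff)
  have "b \<in> {1..Suc n} \<rightarrow>\<^sub>E {0..v}"
    using aP aiv unfolding b by (auto simp: PiE_iff extensional_def le_Suc_eq)
  moreover have "valid (Suc n) D b"
    unfolding valid_def
  proof (intro allI impI)
    fix s assume s: "1 \<le> s \<and> s < Suc n"
    show "okz D s (b s) (b (Suc s))"
    proof (cases "s = n")
      case True thus ?thesis using ok an b by simp
    next
      case False thus ?thesis using av s b unfolding valid_def by auto
    qed
  qed
  moreover have "b (Suc n) = v" using b by simp
  ultimately show "b \<in> BB (Suc n) D v" unfolding BB_def by auto
qed

lemma gg_Suc:
  assumes "n \<ge> 1"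
  shows "gg (Suc n) D v = (\<Sum>u<v. gg n D u) + (if (if D n then odd v else even v) then gg n D v else 0)"
proof -
  have fin: "finite {u. okz D n u v}"
    by (rule finite_subset[of _ "{..v}"]) (auto simp: okz_def)
  have inj: "inj_on (\<lambda>a. a(Suc n := v)) (\<Union>u\<in>{u. okz D n u v}. BB n D u)"
  proof (rule inj_onI)
    fix a b assume a: "a \<in> (\<Union>u\<in>{u. okz D n u v}. BB n D u)" and b: "b \<in> (\<Union>u\<in>{u. okz D n u v}. BB n D u)"
      and eq: "a(Suc n := v) = b(Suc n := v)"
    have u: "a (Suc n) = undefined" "b (Suc n) = undefined"
      using a b unfolding BB_def by (auto simp: PiE_iff extensional_def)
    show "a = b"
    proof (rule ext)
      fix x show "a x = b x" using fun_cong[OF eq, of x] u by (cases "x = Suc n") auto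
    qed
  qed
  have "gg (Suc n) D v = card (\<Union>u\<in>{u. okz D n u v}. BB n D u)"
    unfolding gg_def BB_Suc[OF assms] by (rule card_image[OF inj])
  also have "\<dots> = (\<Sum>u\<in>{u. okz D n u v}. gg n D u)"
    unfolding gg_def
    by (rule card_UN_disjoint[OF fin]) (simp_all add: finite_BB, auto simp: BB_def)
  also have "\<dots> = (\<Sum>u<v. gg n D u) + (if (if D n then odd v else even v) then gg n D v else 0)"
  proof (cases "(if D n then odd v else even v)")
    case True
    hence "{u. okz D n u v} = insert v {..<v}" unfolding okz_def by auto
    thus ?thesis using True by (simp add: add.commute)
  next
    case False
    hence "{u. okz D n u v} = {..<v}" unfolding okz_def by auto
    thus ?thesis using False by simp
  qed
  finally show ?thesis .
qed

lemma cnt: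
  assumes "n \<ge> 1"
  shows "card {a \<in> {1..n} \<rightarrow>\<^sub>E {0..2*k}. valid n D a} = (\<Sum>v\<le>2*k. gg n D v)"
proof -
  have "{a \<in> {1..n} \<rightarrow>\<^sub>E {0..2*k}. valid n D a} = (\<Union>v\<in>{..2*k}. BB n D v)"
  proof (rule set_eqI, rule iffI)
    fix a assume a: "a \<in> {a \<in> {1..n} \<rightarrow>\<^sub>E {0..2*k}. valid n D a}"
    hence "a \<in> BB n D (a n)" unfolding BB_def using valid_mono[of n D a _ n] assms
      by (auto simp: PiE_iff)
    moreover have "a n \<le> 2*k" using a assms by (auto simp: PiE_iff)
    ultimately show "a \<in> (\<Union>v\<in>{..2*k}. BB n D v)" by auto
  next
    fix a assume "a \<in> (\<Union>v\<in>{..2*k}. BB n D v)"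
    thus "a \<in> {a \<in> {1..n} \<rightarrow>\<^sub>E {0..2*k}. valid n D a}"
      unfolding BB_def by (auto simp: PiE_iff)
  qed
  also have "card \<dots> = (\<Sum>v\<le>2*k. gg n D v)"
    unfolding gg_def by (rule card_UN_disjoint) (simp_all add: finite_BB, auto simp: BB_def)
  finally show ?thesis .
qed

definition Evn_fps :: "nat \<Rightarrow> (nat \<Rightarrow> bool) \<Rightarrow> rat fps" where
  "Evn_fps n D = Abs_fps (\<lambda>j. of_nat (gg n D (2*j)))"
definition Odd_fps :: "nat \<Rightarrow> (nat \<Rightarrow> bool) \<Rightarrow> rat fps" where
  "Odd_fps n D = Abs_fps (\<lambda>j. if j = 0 then 0 else of_nat (gg n D (2*j - 1)))"
definition Tot_fps :: "nat \<Rightarrow> (nat \<Rightarrow> bool) \<Rightarrow> rat fps" where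
  "Tot_fps n D = Abs_fps (\<lambda>k. of_nat (\<Sum>v\<le>2*k. gg n D v))"
definition Pre_fps :: "nat \<Rightarrow> (nat \<Rightarrow> bool) \<Rightarrow> rat fps" where
  "Pre_fps n D = Abs_fps (\<lambda>j. of_nat (\<Sum>v<2*j. gg n D v))"

lemma omx_nth: "fps_nth ((1 - fps_X) * (F :: rat fps)) k = fps_nth F k - (if k = 0 then 0 else fps_nth F (k - 1))"
  by (simp add: left_diff_distrib)

lemma TT_rec: "(1 - fps_X) * Tot_fps n D = Evn_fps n D + Odd_fps n D"
proof (rule fps_ext)
  fix k show "fps_nth ((1 - fps_X) * Tot_fps n D) k = fps_nth (Evn_fps n D + Odd_fps n D) k"
  proof (cases k)
    case 0 thus ?thesis by (simp add: omx_nth Tot_fps_def Evn_fps_def Odd_fps_def)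
  next
    case (Suc m)
    have "2 * Suc m = Suc (Suc (2*m))" by simp
    hence "(\<Sum>v\<le>2*Suc m. gg n D v) = (\<Sum>v\<le>2*m. gg n D v) + gg n D (Suc (2*m)) + gg n D (2 * Suc m)"
      by (simp only:) simp
    thus ?thesis using Suc by (simp add: omx_nth Tot_fps_def Evn_fps_def Odd_fps_def)
  qed
qed

lemma PP_rec: "(1 - fps_X) * Pre_fps n D = fps_X * Evn_fps n D + Odd_fps n D"
proof (rule fps_ext)
  fix k show "fps_nth ((1 - fps_X) * Pre_fps n D) k = fps_nth (fps_X * Evn_fps n D + Odd_fps n D) k"
  proof (cases k)
    case 0 thus ?thesis by (simp add: omx_nth Pre_fps_def Evn_fps_def Odd_fps_def)
  next
    case (Suc m)
    have "2 * Suc m = Suc (Suc (2*m))" by simp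
    hence "(\<Sum>v<2*Suc m. gg n D v) = (\<Sum>v<2*m. gg n D v) + gg n D (2*m) + gg n D (Suc (2 * m))"
      by (simp only:) simp
    thus ?thesis using Suc by (simp add: omx_nth Pre_fps_def Evn_fps_def Odd_fps_def)
  qed
qed

lemma step_U:
  assumes "n \<ge> 1" "\<not> D n"
  shows "Evn_fps (Suc n) D = Tot_fps n D" "Odd_fps (Suc n) D = fps_X * Tot_fps n D"
proof -
  show "Evn_fps (Suc n) D = Tot_fps n D"
  proof (rule fps_ext)
    fix j
    have "(\<Sum>v\<le>2*j. of_nat (gg n D v) :: rat) = (\<Sum>v<2*j. of_nat (gg n D v)) + of_nat (gg n D (2*j))"
      by (simp add: lessThan_Suc_atMost[symmetric])
    thus "fps_nth (Evn_fps (Suc n) D) j = fps_nth (Tot_fps n D) j"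
      using assms by (simp add: Evn_fps_def Tot_fps_def gg_Suc)
  qed
  show "Odd_fps (Suc n) D = fps_X * Tot_fps n D"
  proof (rule fps_ext)
    fix j show "fps_nth (Odd_fps (Suc n) D) j = fps_nth (fps_X * Tot_fps n D) j"
    proof (cases j)
      case 0 thus ?thesis by (simp add: Odd_fps_def)
    next
      case (Suc m)
      have "2 * Suc m - 1 = Suc (2*m)" by simp
      moreover have "(\<Sum>v<Suc (2*m). gg n D v) = (\<Sum>v\<le>2*m. gg n D v)"
        by (simp add: lessThan_Suc_atMost)
      ultimately show ?thesis using assms Suc by (simp add: Odd_fps_def Tot_fps_def gg_Suc)
    qed
  qed
qed

lemma step_D:
  assumes "n \<ge> 1" "D n"
  shows "Evn_fps (Suc n) D = Pre_fps n D" "Odd_fps (Suc n) D = Pre_fps n D"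
proof -
  show "Evn_fps (Suc n) D = Pre_fps n D"
    by (rule fps_ext) (use assms in \<open>simp add: Evn_fps_def Pre_fps_def gg_Suc\<close>)
  show "Odd_fps (Suc n) D = Pre_fps n D"
  proof (rule fps_ext)
    fix j show "fps_nth (Odd_fps (Suc n) D) j = fps_nth (Pre_fps n D) j"
    proof (cases j)
      case 0 thus ?thesis by (simp add: Odd_fps_def Pre_fps_def)
    next
      case (Suc m)
      have "2 * Suc m - 1 = Suc (2*m)" "2 * Suc m = Suc (Suc (2*m))" by simp_all
      thus ?thesis using assms Suc by (simp add: Odd_fps_def Pre_fps_def gg_Suc)
    qed
  qed
qed

lemma base1: "Odd_fps 1 D = fps_X * Evn_fps 1 D" "(1 - fps_X) * Evn_fps 1 D = 1"
  by (auto intro!: fps_ext simp: Odd_fps_def Evn_fps_def gg1' omx_nth)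

definition LL :: "nat \<Rightarrow> (nat \<Rightarrow> bool) \<Rightarrow> nat" where
  "LL n D = card {i. 1 \<le> i \<and> i < n \<and> D i \<and> (i = 1 \<or> \<not> D (i - 1))}"

lemma LL1: "LL 1 D = 0"
  unfolding LL_def by simp

lemma LL_Suc:
  assumes "n \<ge> 1"
  shows "LL (Suc n) D = LL n D + (if D n \<and> (n = 1 \<or> \<not> D (n - 1)) then 1 else 0)"
proof -
  let ?A = "{i. 1 \<le> i \<and> i < n \<and> D i \<and> (i = 1 \<or> \<not> D (i - 1))}"
  have fin: "finite ?A" by (rule finite_subset[of _ "{..<n}"]) auto
  show ?thesis
  proof (cases "D n \<and> (n = 1 \<or> \<not> D (n - 1))")
    case True
    hence "{i. 1 \<le> i \<and> i < Suc n \<and> D i \<and> (i = 1 \<or> \<not> D (i - 1))} = insert n ?A"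
      using assms by auto
    thus ?thesis using True fin unfolding LL_def by simp
  next
    case False
    hence "{i. 1 \<le> i \<and> i < Suc n \<and> D i \<and> (i = 1 \<or> \<not> D (i - 1))} = ?A"
      using assms by (auto simp: less_Suc_eq)
    thus ?thesis using False unfolding LL_def by simp
  qed
qed

definition cc :: "rat fps" where
  "cc = 4 * fps_X * inverse ((1 + fps_X) ^ 2)"

lemma opx_inv: "(1 + fps_X :: rat fps) ^ 2 * inverse ((1 + fps_X) ^ 2) = 1"
  by (rule inverse_mult_eq_1') simp

lemma aux4: "(a::rat fps) ^ m * (a ^ 2 * w) * 4 * x * c ^ L = a ^ Suc (Suc m) * ((4 * x * w) * c ^ L)"
  by (simp add: power2_eq_square mult_ac)

lemma invariant:
  assumes "n \<ge> 1"
  shows "(1 - fps_X) ^ n * (Evn_fps n D + Odd_fps n D) = (1 + fps_X) ^ n * cc ^ (LL n D) \<and>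
    (if n \<ge> 2 \<and> D (n - 1) then Odd_fps n D = Evn_fps n D else Odd_fps n D = fps_X * Evn_fps n D)"
  using assms
proof (induction n rule: nat_induct_at_least)
  case base
  have "(1 - fps_X) * (Evn_fps 1 D + fps_X * Evn_fps 1 D) = (1 + fps_X) * ((1 - fps_X) * Evn_fps 1 D)"
    by (simp add: algebra_simps)
  also have "\<dots> = 1 + fps_X" by (simp only: base1 mult_1_right)
  finally have "(1 - fps_X) * (Evn_fps 1 D + Odd_fps 1 D) = 1 + fps_X" by (simp only: base1)
  moreover have "LL 1 D = 0" by (simp add: LL_def)
  moreover have "Odd_fps 1 D = fps_X * Evn_fps 1 D" by (rule base1)
  ultimately show ?case by simp
next
  case (Suc n)
  let ?E = "Evn_fps n D" and ?O = "Odd_fps n D" and ?L = "LL n D" and ?T = "Tot_fps n D"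
  have IH1: "(1 - fps_X) ^ n * (?E + ?O) = (1 + fps_X) ^ n * cc ^ ?L" using Suc.IH by blast
  have IH2: "(if n \<ge> 2 \<and> D (n - 1) then ?O = ?E else ?O = fps_X * ?E)" using Suc.IH by blast
  show ?case
  proof (cases "D n")
    case False
    have L: "LL (Suc n) D = ?L" using LL_Suc[OF Suc.hyps, of D] False by simp
    have EU: "Evn_fps (Suc n) D = ?T" and OU: "Odd_fps (Suc n) D = fps_X * ?T"
      using step_U[of n D, OF Suc.hyps False] by auto
    have "(1 - fps_X) ^ Suc n * (Evn_fps (Suc n) D + Odd_fps (Suc n) D)
        = (1 - fps_X) ^ Suc n * (?T + fps_X * ?T)" by (simp only: EU OU)
    also have "\<dots> = (1 + fps_X) * ((1 - fps_X) ^ n * ((1 - fps_X) * ?T))"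
      by (simp add: algebra_simps)
    also have "\<dots> = (1 + fps_X) * ((1 + fps_X) ^ n * cc ^ ?L)"
      by (simp only: TT_rec IH1)
    also have "\<dots> = (1 + fps_X) ^ Suc n * cc ^ LL (Suc n) D"
      by (simp add: L)
    finally show ?thesis using False OU EU by simp
  next
    case True
    have ED: "Evn_fps (Suc n) D = Pre_fps n D" and OD: "Odd_fps (Suc n) D = Pre_fps n D"
      using step_D[of n D, OF Suc.hyps True] by auto
    have A: "(1 - fps_X) ^ Suc n * (Evn_fps (Suc n) D + Odd_fps (Suc n) D)
        = 2 * ((1 - fps_X) ^ n * ((1 - fps_X) * Pre_fps n D))"
      by (simp only: ED OD) (simp add: algebra_simps)
    also have "\<dots> = 2 * ((1 - fps_X) ^ n * (fps_X * ?E + ?O))"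
      by (simp only: PP_rec)
    finally have A: "(1 - fps_X) ^ Suc n * (Evn_fps (Suc n) D + Odd_fps (Suc n) D)
        = 2 * ((1 - fps_X) ^ n * (fps_X * ?E + ?O))" .
    have ty: "(if Suc n \<ge> 2 \<and> D (Suc n - 1) then Odd_fps (Suc n) D = Evn_fps (Suc n) D
        else Odd_fps (Suc n) D = fps_X * Evn_fps (Suc n) D)"
      using True Suc.hyps ED OD by simp
    show ?thesis
    proof (cases "n \<ge> 2 \<and> D (n - 1)")
      case True2: True
      have L: "LL (Suc n) D = ?L" using LL_Suc[OF Suc.hyps, of D] True2 by simp
      have O: "?O = ?E" using IH2 True2 by simp
      have "2 * ((1 - fps_X) ^ n * (fps_X * ?E + ?O)) = (1 + fps_X) * ((1 - fps_X) ^ n * (?E + ?E))"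
        by (simp only: O) (simp add: algebra_simps)
      also have "\<dots> = (1 + fps_X) * ((1 + fps_X) ^ n * cc ^ ?L)" using IH1 O by simp
      also have "\<dots> = (1 + fps_X) ^ Suc n * cc ^ LL (Suc n) D" by (simp add: L)
      finally show ?thesis using A ty by simp
    next
      case False2: False
      have L: "LL (Suc n) D = Suc ?L" using LL_Suc[OF Suc.hyps, of D] False2 True Suc.hyps by auto
      have O: "?O = fps_X * ?E" using IH2 False2 by simp
      obtain m where m: "n = Suc m" using Suc.hyps by (cases n) auto
      have "(1 + fps_X) * ((1 - fps_X) ^ n * ?E) = (1 - fps_X) ^ n * (?E + fps_X * ?E)"
        by (simp add: algebra_simps)
      also have "\<dots> = (1 + fps_X) ^ n * cc ^ ?L" using IH1 O by simp
      also have "\<dots> = (1 + fps_X) * ((1 + fps_X) ^ m * cc ^ ?L)" by (simp add: m)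
      finally have E0: "(1 + fps_X) * ((1 - fps_X) ^ n * ?E) = (1 + fps_X) * ((1 + fps_X) ^ m * cc ^ ?L)" .
      have nz: "(1 + fps_X :: rat fps) \<noteq> 0"
      proof
        assume "(1 + fps_X :: rat fps) = 0"
        hence "fps_nth (1 + fps_X :: rat fps) 0 = 0" by simp
        thus False by simp
      qed
      have E: "(1 - fps_X) ^ n * ?E = (1 + fps_X) ^ m * cc ^ ?L"
        using E0 nz by simp
      have "2 * ((1 - fps_X) ^ n * (fps_X * ?E + ?O)) = 4 * fps_X * ((1 - fps_X) ^ n * ?E)"
        by (simp only: O) (simp add: algebra_simps)
      also have "\<dots> = 4 * fps_X * ((1 + fps_X) ^ m * cc ^ ?L)" by (simp only: E)
      also have "\<dots> = (1 + fps_X) ^ m * ((1 + fps_X) ^ 2 * inverse ((1 + fps_X) ^ 2)) * 4 * fps_X * cc ^ ?L"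
        by (simp add: opx_inv)
      also have "\<dots> = (1 + fps_X) ^ Suc (Suc m) * (cc * cc ^ ?L)"
        using aux4[of "1 + fps_X" m "inverse ((1 + fps_X) ^ 2)" fps_X "cc" ?L]
        by (simp only: cc_def[symmetric])
      also have "\<dots> = (1 + fps_X) ^ Suc n * cc ^ LL (Suc n) D"
        unfolding L by (simp add: m)
      finally show ?thesis using A ty by simp
    qed
  qed
qed

lemma TT_closed:
  assumes "n \<ge> 1"
  shows "Tot_fps n D = (1 + fps_X) ^ n * cc ^ (LL n D) * inverse ((1 - fps_X) ^ Suc n)"
proof -
  have "(1 - fps_X) ^ Suc n * Tot_fps n D = (1 + fps_X) ^ n * cc ^ (LL n D)"
    using invariant[OF assms, of D] by (simp add: TT_rec[symmetric] algebra_simps)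
  hence "Tot_fps n D = ((1 - fps_X) ^ Suc n * inverse ((1 - fps_X) ^ Suc n)) * Tot_fps n D \<and> True"
    by (simp add: inverse_mult_eq_1')
  hence "Tot_fps n D = ((1 - fps_X) ^ Suc n * Tot_fps n D) * inverse ((1 - fps_X) ^ Suc n)"
    by (simp add: algebra_simps)
  also have "\<dots> = (1 + fps_X) ^ n * cc ^ (LL n D) * inverse ((1 - fps_X) ^ Suc n)"
    using \<open>(1 - fps_X) ^ Suc n * Tot_fps n D = _\<close> by simp
  finally show ?thesis .
qed

lemma mult_inv_solve:
  assumes "(g :: rat fps) * f = h" "fps_nth g 0 \<noteq> 0"
  shows "f = h * inverse g"
proof -
  have "f = (inverse g * g) * f" using inverse_mult_eq_1[OF assms(2)] by simp
  also have "\<dots> = h * inverse g" using assms(1) by (simp add: algebra_simps)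
  finally show ?thesis .
qed

theorem theorem4p6:
  fixes p :: "nat \<Rightarrow> nat" and n :: nat
  assumes "p permutes {1..n}"
  shows "(Abs_fps (\<lambda>k. of_nat (left_enriched_Omega n p k)) :: rat fps)
    = (1 + fps_X) ^ n / (1 - fps_X) ^ (n + 1)
      * (4 * fps_X / (1 + fps_X) ^ 2) ^ (lpe n p)"
proof -
  define D where "D = (\<lambda>s. p (Suc s) < p s)"
  have inj: "inj_on p {1..n}" by (rule permutes_inj_on[OF assms])
  have img: "\<And>i. i \<in> {1..n} \<Longrightarrow> p i \<in> {1..n}" by (simp only: permutes_in_image[OF assms])
  have neq: "\<And>s. 1 \<le> s \<Longrightarrow> s < n \<Longrightarrow> p s \<noteq> p (Suc s)"
  proof
    fix s assume s: "1 \<le> s" "s < n" and eq: "p s = p (Suc s)"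
    have "s \<in> {1..n}" "Suc s \<in> {1..n}" using s by auto
    hence "s = Suc s" using inj_onD[OF inj eq] by blast
    thus False by simp
  qed
  have pt: "(a s \<le> a (s + 1) \<and>
        (p s < p (s + 1) \<longrightarrow> a s < a (s + 1) \<or> (a s = a (s + 1) \<and> plus_type (a s))) \<and>
        (p s > p (s + 1) \<longrightarrow> a s < a (s + 1) \<or> (a s = a (s + 1) \<and> minus_type (a s))))
       \<longleftrightarrow> okz D s (a s) (a (Suc s))" if "1 \<le> s" "s < n" for a s
  proof (cases "p s < p (Suc s)")
    case True
    hence "\<not> p (Suc s) < p s" by simp
    thus ?thesis using True unfolding okz_def D_def plus_type_def minus_type_def by auto
  next
    case False
    hence "p (Suc s) < p s" using neq[OF that] by (meson linorder_neqE_nat)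
    thus ?thesis using False unfolding okz_def D_def plus_type_def minus_type_def by auto
  qed
  have Om: "left_enriched_Omega n p k = card {a \<in> {1..n} \<rightarrow>\<^sub>E {0..2*k}. valid n D a}" for k
    unfolding left_enriched_Omega_def Zk_def valid_def
    by (rule arg_cong[where f = card], rule Collect_cong) (use pt in blast)
  have Lp: "lpe n p = LL n D"
  proof -
    have "{i. 1 \<le> i \<and> i < n \<and> pval n p (i - 1) < pval n p i \<and> pval n p i > pval n p (i + 1)}
        = {i. 1 \<le> i \<and> i < n \<and> D i \<and> (i = 1 \<or> \<not> D (i - 1))}"
    proof (rule Collect_cong)
      fix i
      show "(1 \<le> i \<and> i < n \<and> pval n p (i - 1) < pval n p i \<and> pval n p i > pval n p (i + 1)) =
            (1 \<le> i \<and> i < n \<and> D i \<and> (i = 1 \<or> \<not> D (i - 1)))"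
      proof (cases "1 \<le> i \<and> i < n")
        case True
        have pi: "p i \<ge> 1" using img[of i] True by auto
        show ?thesis
        proof (cases "i = 1")
          case True2: True
          thus ?thesis using True pi by (simp add: pval_def D_def)
        next
          case False
          have i1: "1 \<le> i - 1" "i - 1 < n" "Suc (i - 1) = i" using True False by auto
          have "p (i - 1) \<noteq> p i" using neq[OF i1(1,2)] i1(3) by simp
          thus ?thesis using True False pi by (auto simp: pval_def D_def)
        qed
      qed blast
    qed
    thus ?thesis unfolding lpe_def LL_def by simp
  qed
  show ?thesis
  proof (cases "n = 0")
    case True
    have L: "Abs_fps (\<lambda>k. of_nat (left_enriched_Omega n p k)) = (Abs_fps (\<lambda>_. 1) :: rat fps)"
      using True by (simp add: left_enriched_Omega_def)
    have "(1 - fps_X) * (Abs_fps (\<lambda>_. 1) :: rat fps) = 1"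
      by (rule fps_ext) (simp add: omx_nth)
    hence "(Abs_fps (\<lambda>_. 1) :: rat fps) = 1 * inverse (1 - fps_X)"
      by (rule mult_inv_solve) simp
    moreover have "lpe n p = 0" using True by (simp add: lpe_def)
    ultimately show ?thesis using L True by (simp add: fps_divide_unit)
  next
    case False
    hence n1: "n \<ge> 1" by simp
    have "Abs_fps (\<lambda>k. of_nat (left_enriched_Omega n p k)) = Tot_fps n D"
      unfolding Tot_fps_def Om cnt[OF n1] ..
    also have "\<dots> = (1 + fps_X) ^ n * cc ^ (LL n D) * inverse ((1 - fps_X) ^ Suc n)"
      by (rule TT_closed[OF n1])
    also have "\<dots> = (1 + fps_X) ^ n / (1 - fps_X) ^ (n + 1)
      * (4 * fps_X / (1 + fps_X) ^ 2) ^ (lpe n p)"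
      unfolding Lp cc_def by (simp add: fps_divide_unit algebra_simps)
    finally show ?thesis .
  qed
qed

end
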